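(* Let $1\le q<2$ and let $\mathbf{x}_k$ be a data point with $\mathbf{x}_k\ne\mathbf{M}$. Then there exists $\delta_0>0$ such that for every $\mathbf{y}\in B(\mathbf{x}_k,\delta_0)\setminus\{\mathbf{x}_k\}$ there is an integer $s\ge1$ (depending on $\mathbf{y}$) with $\mathbf{T}_1^{j}(\mathbf{y})\in B(\mathbf{x}_k,\delta_0)$ for $0\le j\le s-1$ and $\mathbf{T}_1^{s}(\mathbf{y})\notin B(\mathbf{x}_k,\delta_0)$. Here $B(\mathbf{x}_k,\delta_0)$ is the open Euclidean ball and $\mathbf{T}_1^{j}$ is the $j$-fold iterate of $\mathbf{T}_1$.
   Context: Let $\mathbf{x}_1,\dots,\mathbf{x}_m\in\mathbb{R}^d$ be distinct data points, not all lying on a common affine line, and $\eta_1,\dots,\eta_m>0$. $C_q(\mathbf{y})=\sum_{i=1}^m \eta_i^q\|\mathbf{y}-\mathbf{x}_i\|^q$ is strictly convex with unique minimizer $\mathbf{M}$. $\mathbf{T}_1(\mathbf{y})=\frac{\sum_{i} \eta_i^q\|\mathbf{y}-\mathbf{x}_i\|^{q-2}\mathbf{x}_i}{\sum_{i} \eta_i^q\|\mathbf{y}-\mathbf{x}_i\|^{q-2}}$ for $\mathbf{y}\notin\{\mathbf{x}_i\}$, extended by $\mathbf{T}_1(\mathbf{x}_i)=\mathbf{x}_i$. *)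

theory Defs
  imports "HOL-Analysis.Analysis"
begin

definition Cq :: "nat set \<Rightarrow> (nat \<Rightarrow> 'a::euclidean_space) \<Rightarrow> (nat \<Rightarrow> real) \<Rightarrow> real \<Rightarrow> 'a \<Rightarrow> real" where
  "Cq I x \<eta> q y = (\<Sum>i\<in>I. (\<eta> i) powr q * (norm (y - x i)) powr q)"

definition T1 :: "nat set \<Rightarrow> (nat \<Rightarrow> 'a::euclidean_space) \<Rightarrow> (nat \<Rightarrow> real) \<Rightarrow> real \<Rightarrow> 'a \<Rightarrow> 'a" where
  "T1 I x \<eta> q y =
     (if y \<in> x ` I then y
      else (\<Sum>i\<in>I. ((\<eta> i) powr q * (norm (y - x i)) powr (q - 2)) *\<^sub>R x i) /\<^sub>R
           (\<Sum>i\<in>I. (\<eta> i) powr q * (norm (y - x i)) powr (q - 2)))"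

end

theory Submission imports Defs begin
lemma powr_tangent:
  fixes r s q :: real
  assumes r: "r > 0" and s: "s \<ge> 0" and q: "q \<ge> 1"
  shows "s powr q \<ge> r powr q + q * r powr (q - 1) * (s - r)"
proof (cases "s = 0")
  case True
  have "r powr q + q * r powr (q - 1) * (0 - r) = (1 - q) * r powr q"
    using r by (simp add: powr_diff field_simps)
  also have "\<dots> \<le> 0" using q r by (simp add: mult_nonpos_nonneg)
  finally show ?thesis using True by simp
next
  case False
  then have "s > 0" using s by simp
  have "q * r powr (q - 1) * (s - r) \<le> s powr q - r powr q"
    using \<open>s > 0\<close> r
    by (intro convex_on_imp_above_tangent[where A = "{0<..}"] powr_convex q)
       (auto intro!: derivative_eq_intros simp: interior_open)
  then show ?thesis by simp
qed

lemma norm_powr_subgrad: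
  fixes a b :: "'a::euclidean_space" and q :: real
  assumes a: "a \<noteq> 0" and q: "q \<ge> 1"
  shows "norm b powr q \<ge> norm a powr q + q * norm a powr (q - 2) * (a \<bullet> (b - a))"
proof -
  have r: "norm a > 0" using a by simp
  have cs: "a \<bullet> b \<le> norm a * norm b" by (rule norm_cauchy_schwarz)
  have e1: "norm a powr (q - 1) = norm a powr (q - 2) * norm a"
  proof -
    have "norm a powr (q - 2 + 1) = norm a powr (q - 2) * norm a powr 1" by (rule powr_add)
    then show ?thesis using r by simp
  qed
  have "q * norm a powr (q - 2) * (a \<bullet> (b - a)) = q * norm a powr (q - 2) * (a \<bullet> b - norm a * norm a)"
    by (simp add: inner_diff_right dot_square_norm power2_eq_square)
  also have "\<dots> \<le> q * norm a powr (q - 2) * (norm a * norm b - norm a * norm a)"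
    using cs q r by (intro mult_left_mono) auto
  also have "\<dots> = q * norm a powr (q - 1) * (norm b - norm a)"
    by (simp add: e1 algebra_simps)
  finally show ?thesis using powr_tangent[OF r norm_ge_zero q, of b] by linarith
qed

lemma claimA:
  fixes x :: "nat \<Rightarrow> 'a::euclidean_space" and \<eta> :: "nat \<Rightarrow> real"
  assumes fin: "finite I" and inj: "inj_on x I" and nl: "\<not> collinear (x ` I)"
    and eta: "\<And>i. i \<in> I \<Longrightarrow> \<eta> i > 0" and q: "1 \<le> q"
    and Mmin: "Cq I x \<eta> q M \<le> Cq I x \<eta> q (x k)"
    and k: "k \<in> I" and xk: "x k \<noteq> M"
  defines "R \<equiv> (\<Sum>i\<in>I - {k}. (\<eta> i powr q * norm (x k - x i) powr (q - 2)) *\<^sub>R (x i - x k))"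
  shows "(q > 1 \<longrightarrow> R \<noteq> 0) \<and> (q = 1 \<longrightarrow> norm R > \<eta> k)"
proof -
  define J where "J = I - {k}"
  define v where "v = M - x k"
  have v0: "v \<noteq> 0" using xk by (simp add: v_def)
  have aJ: "x k - x i \<noteq> 0" if "i \<in> J" for i
    using that inj k by (auto simp: J_def inj_on_def)
  define sl where "sl i = \<eta> i powr q * (norm (M - x i) powr q - norm (x k - x i) powr q
      - q * norm (x k - x i) powr (q - 2) * ((x k - x i) \<bullet> v))" for i
  have sl0: "sl i \<ge> 0" if "i \<in> J" for i
  proof -
    have "norm (M - x i) powr q \<ge> norm (x k - x i) powr q + q * norm (x k - x i) powr (q - 2) * ((x k - x i) \<bullet> ((M - x i) - (x k - x i)))"
      by (rule norm_powr_subgrad[OF aJ[OF that] q])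
    then show ?thesis unfolding sl_def v_def using eta[of i] that by (auto simp: J_def)
  qed
  have Rv: "R \<bullet> v = - (\<Sum>i\<in>J. \<eta> i powr q * norm (x k - x i) powr (q - 2) * ((x k - x i) \<bullet> v))"
    unfolding R_def J_def[symmetric] inner_sum_left
    by (simp add: sum_negf[symmetric] inner_diff_left algebra_simps)
  have CM: "Cq I x \<eta> q M = (\<Sum>i\<in>J. \<eta> i powr q * norm (M - x i) powr q) + \<eta> k powr q * norm v powr q"
    unfolding Cq_def J_def v_def using fin k by (simp add: sum.remove)
  have Ck: "Cq I x \<eta> q (x k) = (\<Sum>i\<in>J. \<eta> i powr q * norm (x k - x i) powr q)"
    unfolding Cq_def J_def using fin k q by (simp add: sum.remove)
  have key: "Cq I x \<eta> q M = (\<Sum>i\<in>J. sl i) + Cq I x \<eta> q (x k) - q * (R \<bullet> v) + \<eta> k powr q * norm v powr q"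
    unfolding CM Ck Rv sl_def by (simp add: sum.distrib sum_subtractf sum_distrib_left algebra_simps)
  have slsum: "(\<Sum>i\<in>J. sl i) \<ge> 0" using sl0 by (simp add: sum_nonneg)
  have etak: "\<eta> k > 0" using eta k by simp
  show ?thesis
  proof (intro conjI impI)
    assume q1: "q > 1"
    show "R \<noteq> 0"
    proof
      assume "R = 0"
      then have "Cq I x \<eta> q M \<ge> Cq I x \<eta> q (x k) + \<eta> k powr q * norm v powr q"
        using key slsum by simp
      moreover have "\<eta> k powr q * norm v powr q > 0" using etak v0 by simp
      ultimately show False using Mmin by simp
    qed
  next
    assume q1: "q = 1"
    show "norm R > \<eta> k"
    proof (rule ccontr)
      assume "\<not> norm R > \<eta> k"
      then have "R \<bullet> v \<le> \<eta> k * norm v"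
        using norm_cauchy_schwarz[of R v] mult_right_mono[of "norm R" "\<eta> k" "norm v"] by simp
      then have "Cq I x \<eta> q M \<ge> (\<Sum>i\<in>J. sl i) + Cq I x \<eta> q (x k)"
        using key q1 etak by simp
      then have "(\<Sum>i\<in>J. sl i) = 0" using Mmin slsum by simp
      then have slz: "\<forall>i\<in>J. sl i = 0" using sum_nonneg_eq_0_iff[of J sl] fin sl0 by (simp add: J_def)
      have "\<exists>c. x i = x k + c *\<^sub>R v" if "i \<in> I" for i
      proof (cases "i = k")
        case True then show ?thesis by (intro exI[of _ 0]) simp
      next
        case False
        then have iJ: "i \<in> J" using that by (simp add: J_def)
        define a where "a = x k - x i"
        define b where "b = M - x i"
        have a0: "a \<noteq> 0" using aJ[OF iJ] by (simp add: a_def)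
        have ba: "b = a + v" by (simp add: a_def b_def v_def)
        have "norm b - norm a - norm a powr (- 1) * (a \<bullet> v) = 0"
        proof -
          have "sl i = 0" using slz iJ by blast
          then show ?thesis using eta[of i] that q1 unfolding sl_def a_def b_def by simp
        qed
        then have "norm a * norm b = norm a * norm a + a \<bullet> v"
          using a0 by (simp add: powr_minus field_simps)
        also have "\<dots> = a \<bullet> b" by (simp add: ba inner_add_right dot_square_norm power2_eq_square)
        finally have "norm a *\<^sub>R b = norm b *\<^sub>R a" using norm_cauchy_schwarz_eq by metis
        then have e: "norm a *\<^sub>R v = (norm b - norm a) *\<^sub>R a" by (simp add: ba algebra_simps)
        have nb: "norm b - norm a \<noteq> 0"
        proof
          assume "norm b - norm a = 0"
          then have "norm a *\<^sub>R v = 0" using e by simp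
          then show False using a0 v0 by simp
        qed
        have "a = (norm a / (norm b - norm a)) *\<^sub>R v"
          using e nb by (simp add: field_simps scaleR_left_commute[symmetric])
             (metis (no_types, lifting) nb e scaleR_scaleR divide_inverse_commute left_inverse mult.commute scaleR_one)
        moreover have "x i = x k - a" by (simp add: a_def)
        ultimately show ?thesis
          by (intro exI[of _ "- (norm a / (norm b - norm a))"]) (simp add: algebra_simps)
      qed
      then have "collinear (x ` I)" unfolding collinear_alt by blast
      then show False using nl by simp
    qed
  qed
qed

lemma claimB:
  fixes x :: "nat \<Rightarrow> 'a::euclidean_space" and \<eta> :: "nat \<Rightarrow> real"
  assumes fin: "finite I" and inj: "inj_on x I"
    and eta: "\<And>i. i \<in> I \<Longrightarrow> \<eta> i > 0" and q: "1 \<le> q" "q < 2"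
    and k: "k \<in> I"
    and RA: "(q > 1 \<longrightarrow> (\<Sum>i\<in>I - {k}. (\<eta> i powr q * norm (x k - x i) powr (q - 2)) *\<^sub>R (x i - x k)) \<noteq> 0)
      \<and> (q = 1 \<longrightarrow> norm (\<Sum>i\<in>I - {k}. (\<eta> i powr q * norm (x k - x i) powr (q - 2)) *\<^sub>R (x i - x k)) > \<eta> k)"
  shows "\<exists>c>1. \<exists>\<delta>>0. \<forall>y. y \<noteq> x k \<and> dist y (x k) < \<delta> \<longrightarrow>
           y \<notin> x ` I \<and> norm (T1 I x \<eta> q y - x k) \<ge> c * dist y (x k)"
proof -
  define J where "J = I - {k}"
  define w where "w i y = \<eta> i powr q * norm (y - x i) powr (q - 2)" for i y
  define N where "N y = (\<Sum>i\<in>J. w i y *\<^sub>R (x i - x k))" for y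
  define S where "S y = (\<Sum>i\<in>J. w i y)" for y
  define R where "R = N (x k)"
  have RA': "(q > 1 \<longrightarrow> R \<noteq> 0) \<and> (q = 1 \<longrightarrow> norm R > \<eta> k)"
    using RA unfolding R_def N_def w_def J_def by simp
  have aJ: "x k - x i \<noteq> 0" if "i \<in> J" for i
    using that inj k by (auto simp: J_def inj_on_def)
  have wlim: "((\<lambda>y. w i y) \<longlongrightarrow> w i (x k)) (at (x k))" if "i \<in> J" for i
    unfolding w_def using aJ[OF that]
    by (auto intro!: tendsto_intros)
  have Nlim: "(N \<longlongrightarrow> R) (at (x k))"
    unfolding R_def N_def by (intro tendsto_sum tendsto_scaleR wlim tendsto_const)
  have Slim: "(S \<longlongrightarrow> S (x k)) (at (x k))"
    unfolding S_def by (intro tendsto_sum wlim)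
  have dlim: "((\<lambda>y. dist y (x k)) \<longlongrightarrow> 0) (at (x k))"
  proof -
    have "((\<lambda>y. dist y (x k)) \<longlongrightarrow> dist (x k) (x k)) (at (x k))" by (intro tendsto_intros)
    then show ?thesis by simp
  qed
  define L where "L = (if q = 1 then \<eta> k else 0)"
  have Hlim: "((\<lambda>y. \<eta> k powr q * dist y (x k) powr (q - 1)) \<longlongrightarrow> L) (at (x k))"
  proof (cases "q = 1")
    case True
    have "\<forall>\<^sub>F y in at (x k). \<eta> k = \<eta> k powr q * dist y (x k) powr (q - 1)"
    proof -
      have "\<forall>\<^sub>F y in at (x k). y \<noteq> x k" by (simp add: eventually_at_filter)
      then show ?thesis using True eta[OF k] by (auto elim!: eventually_mono)
    qed
    then show ?thesis unfolding L_def using True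
      by (intro Lim_transform_eventually[OF tendsto_const]) auto
  next
    case False
    then have "q - 1 > 0" using q by simp
    have lim0: "((\<lambda>y. dist y (x k) powr (q - 1)) \<longlongrightarrow> 0) (at (x k))"
      by (rule tendsto_zero_powrI[OF dlim tendsto_const _ \<open>q - 1 > 0\<close>]) simp
    then show ?thesis unfolding L_def using False
      using tendsto_mult[OF tendsto_const lim0, of "\<eta> k powr q"] by simp
  qed
  define c where "c = (if q = 1 then (norm R / \<eta> k + 1) / 2 else 2)"
  have etak: "\<eta> k > 0" using eta k by simp
  have c1: "c > 1" and cL: "norm R - c * L > 0"
  proof -
    show "c > 1"
    proof (cases "q = 1")
      case True
      then have "norm R / \<eta> k > 1" using RA' etak by simp
      then show ?thesis using True by (simp add: c_def)
    qed (simp add: c_def)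
    show "norm R - c * L > 0"
    proof (cases "q = 1")
      case True
      then have "norm R > \<eta> k" using RA' by simp
      then show ?thesis using True etak by (simp add: c_def L_def field_simps)
    next
      case False
      then show ?thesis using RA' q by (simp add: L_def)
    qed
  qed
  have Glim: "((\<lambda>y. norm (N y) - c * (\<eta> k powr q * dist y (x k) powr (q - 1) + S y * dist y (x k)))
      \<longlongrightarrow> norm R - c * (L + S (x k) * 0)) (at (x k))"
    by (intro tendsto_intros Nlim Hlim Slim dlim)
  have ev1: "\<forall>\<^sub>F y in at (x k). norm (N y) - c * (\<eta> k powr q * dist y (x k) powr (q - 1) + S y * dist y (x k)) > 0"
    using order_tendstoD(1)[OF Glim, of 0] cL by simp
  have ev2: "\<forall>\<^sub>F y in at (x k). \<forall>i\<in>J. y \<noteq> x i"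
    using fin aJ by (intro eventually_ball_finite)
      (auto simp: J_def intro!: tendsto_imp_eventually_ne[OF tendsto_ident_at])
  obtain \<delta> where \<delta>: "\<delta> > 0" and P: "\<And>y. y \<noteq> x k \<Longrightarrow> dist y (x k) < \<delta> \<Longrightarrow>
      norm (N y) - c * (\<eta> k powr q * dist y (x k) powr (q - 1) + S y * dist y (x k)) > 0 \<and> (\<forall>i\<in>J. y \<noteq> x i)"
    using eventually_conj[OF ev1 ev2] unfolding eventually_at by auto
  show ?thesis
  proof (rule exI[of _ c], rule conjI[OF c1], rule exI[of _ \<delta>], rule conjI[OF \<delta>], intro allI impI conjI)
    fix y assume yy: "y \<noteq> x k \<and> dist y (x k) < \<delta>"
    note Py = P[OF yy[THEN conjunct1] yy[THEN conjunct2]]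
    define d where "d = dist y (x k)"
    have d0: "d > 0" using yy by (simp add: d_def)
    have ynot: "\<forall>i\<in>I. y \<noteq> x i" using Py yy by (auto simp: J_def)
    then show "y \<notin> x ` I" by auto
    have wpos: "w i y > 0" if "i \<in> I" for i
      using ynot that eta[OF that] by (auto simp: w_def)
    have wk: "w k y = \<eta> k powr q * d powr (q - 2)"
      by (simp add: w_def d_def dist_norm)
    define W where "W = (\<Sum>i\<in>I. w i y)"
    have WS: "W = w k y + S y" unfolding W_def S_def J_def using fin k by (simp add: sum.remove)
    have Spos: "S y \<ge> 0" unfolding S_def using wpos by (auto simp: J_def intro: sum_nonneg less_imp_le)
    have Wpos: "W > 0" using WS Spos wpos[OF k] by simp
    have T: "T1 I x \<eta> q y = (\<Sum>i\<in>I. w i y *\<^sub>R x i) /\<^sub>R W"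
      unfolding T1_def W_def w_def using \<open>y \<notin> x ` I\<close> by simp
    have "(\<Sum>i\<in>I. w i y *\<^sub>R (x i - x k)) = N y"
      unfolding N_def J_def using fin k by (simp add: sum.remove)
    then have "(\<Sum>i\<in>I. w i y *\<^sub>R x i) - W *\<^sub>R x k = N y"
      by (simp add: W_def scaleR_diff_right sum_subtractf scaleR_sum_left)
    then have TN: "T1 I x \<eta> q y - x k = N y /\<^sub>R W"
      using Wpos unfolding T by (simp add: algebra_simps)
    have dq: "d powr (q - 1) = d powr (q - 2) * d"
    proof -
      have "d powr (q - 2 + 1) = d powr (q - 2) * d powr 1" by (rule powr_add)
      then show ?thesis using d0 by simp
    qed
    have "norm (N y) > c * d * W"
      using Py[THEN conjunct1] unfolding WS wk d_def[symmetric] dq by (simp add: algebra_simps)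
    then have "norm (N y) / W > c * d" using Wpos by (simp add: field_simps)
    then show "c * dist y (x k) \<le> norm (T1 I x \<eta> q y - x k)"
      unfolding TN d_def using Wpos by (simp add: divide_inverse mult.commute)
  qed
qed

theorem lemma3:
  fixes x :: "nat \<Rightarrow> 'a::euclidean_space" and \<eta> :: "nat \<Rightarrow> real"
    and m k :: nat and q :: real and M :: 'a
  assumes distinct: "inj_on x {1..m}"
    and not_line: "\<not> collinear (x ` {1..m})"
    and eta_pos: "\<And>i. i \<in> {1..m} \<Longrightarrow> \<eta> i > 0"
    and q: "1 \<le> q" "q < 2"
    and M_min: "\<And>z. Cq {1..m} x \<eta> q M \<le> Cq {1..m} x \<eta> q z"
    and k: "k \<in> {1..m}"
    and xk: "x k \<noteq> M"
  shows "\<exists>\<delta>0>0. \<forall>y \<in> ball (x k) \<delta>0 - {x k}.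
           \<exists>s::nat. s \<ge> 1 \<and>
             (\<forall>j<s. (T1 {1..m} x \<eta> q ^^ j) y \<in> ball (x k) \<delta>0) \<and>
             (T1 {1..m} x \<eta> q ^^ s) y \<notin> ball (x k) \<delta>0"
proof -
  note A = claimA[OF finite_atLeastAtMost distinct not_line eta_pos q(1) M_min k xk]
  obtain c \<delta> where c1: "c > 1" and \<delta>: "\<delta> > 0" and B: "\<And>y. y \<noteq> x k \<Longrightarrow> dist y (x k) < \<delta> \<Longrightarrow>
      y \<notin> x ` {1..m} \<and> norm (T1 {1..m} x \<eta> q y - x k) \<ge> c * dist y (x k)"
    using claimB[OF finite_atLeastAtMost distinct eta_pos q k A] by blast
  define T where "T = T1 {1..m} x \<eta> q"
  show ?thesis
  proof (rule exI[of _ \<delta>], rule conjI[OF \<delta>], rule ballI)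
    fix y assume y: "y \<in> ball (x k) \<delta> - {x k}"
    define d where "d = dist y (x k)"
    have d0: "d > 0" using y by (simp add: d_def)
    have grow: "(\<forall>j<n. (T ^^ j) y \<in> ball (x k) \<delta>) \<longrightarrow> norm ((T ^^ n) y - x k) \<ge> c ^ n * d" for n
    proof (induction n)
      case 0 then show ?case by (simp add: d_def dist_norm)
    next
      case (Suc n)
      show ?case
      proof
        assume H: "\<forall>j<Suc n. (T ^^ j) y \<in> ball (x k) \<delta>"
        define z where "z = (T ^^ n) y"
        have zb: "z \<in> ball (x k) \<delta>" using H by (simp add: z_def)
        have zn: "norm (z - x k) \<ge> c ^ n * d" using Suc H by (simp add: z_def)
        have "c ^ n * d > 0" using c1 d0 by simp
        then have zk: "z \<noteq> x k" using zn by auto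
        have "norm (T z - x k) \<ge> c * dist z (x k)"
          using B[OF zk] zb by (simp add: T_def dist_commute)
        moreover have "c * dist z (x k) \<ge> c * (c ^ n * d)"
          using zn c1 by (simp add: dist_norm)
        ultimately show "norm ((T ^^ Suc n) y - x k) \<ge> c ^ Suc n * d"
          by (simp add: z_def)
      qed
    qed
    obtain n where n: "\<delta> / d < c ^ n" using real_arch_pow[OF c1] by blast
    have ex: "\<exists>s. (T ^^ s) y \<notin> ball (x k) \<delta>"
    proof (rule ccontr)
      assume "\<not> ?thesis"
      then have all: "\<forall>j. (T ^^ j) y \<in> ball (x k) \<delta>" by blast
      then have "norm ((T ^^ n) y - x k) \<ge> c ^ n * d" using grow by blast
      moreover have "c ^ n * d > \<delta>" using n d0 by (simp add: field_simps)
      ultimately have "(T ^^ n) y \<notin> ball (x k) \<delta>" by (simp add: dist_norm norm_minus_commute)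
      then show False using all by blast
    qed
    define s where "s = (LEAST s. (T ^^ s) y \<notin> ball (x k) \<delta>)"
    have s1: "(T ^^ s) y \<notin> ball (x k) \<delta>" unfolding s_def using ex by (rule LeastI_ex)
    have s2: "\<forall>j<s. (T ^^ j) y \<in> ball (x k) \<delta>" unfolding s_def using not_less_Least by blast
    have "s \<noteq> 0"
    proof
      assume "s = 0"
      then show False using s1 y by simp
    qed
    then show "\<exists>s::nat. s \<ge> 1 \<and> (\<forall>j<s. (T1 {1..m} x \<eta> q ^^ j) y \<in> ball (x k) \<delta>) \<and>
             (T1 {1..m} x \<eta> q ^^ s) y \<notin> ball (x k) \<delta>"
      using s1 s2 unfolding T_def by (intro exI[of _ s]) auto
  qed
qed
end
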